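(* Let $t\in\mathtt T_J$, $\mathtt D$ a list context, $\Gamma$ an environment, $\sigma$ a type and $n\in\mathbb N$. Then $\Gamma\vdash^n \mathtt D\langle\lambda x.t\rangle:\sigma$ is derivable in $\cap J$ if and only if $\Gamma\vdash^n \lambda x.\mathtt D\langle t\rangle:\sigma$ is derivable in $\cap J$ (where variables bound by $\mathtt D$ are distinct from $x$ and not free in... are chosen by $\alpha$-conversion so that $x$ does not occur in $\mathtt D$).
   Context: Terms $\mathtt T_J$: $t,u,r ::= x \mid \lambda x.t \mid t(u,y.r)$ ($y$ bound in $r$), up to $\alpha$-equivalence. List contexts $\mathtt D ::= \Diamond \mid t(u,y.\mathtt D)$. System $\cap J$: types $\sigma,\tau ::= \alpha \mid \mathcal M\to\sigma$, where $\mathcal M=[\sigma_i]_{i\in I}$ is a finite (possibly empty) multiset of types; $\sqcup$ is multiset union. Environments $\Gamma$ map variables to multisets, with finitely many non-empty; $\Gamma\wedge\Delta$ is pointwise multiset union; $\Gamma;x:\mathcal M$ extends $\Gamma$ (with $x\notin\mathrm{dom}\,\Gamma$). Choice operator: $\mathrm{ch}(\mathcal M)=\mathcal M$ if $\mathcal M\ne[\,]$, and $\mathrm{ch}([\,])=[\tau]$ for an arbitrary type $\tau$ chosen in each rule instance. Rules: (var) $x:[\sigma]\vdash x:\sigma$; (abs) from $\Gamma;x:\mathcal M\vdash t:\sigma$ infer $\Gamma\vdash\lambda x.t:\mathcal M\to\sigma$; (many) from $(\Gamma_i\vdash t:\sigma_i)_{i\in I}$ with $I\neq\emptyset$ infer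 $\wedge_{i\in I}\Gamma_i\vdash t:[\sigma_i]_{i\in I}$; (app) from $\Gamma\vdash t:\mathrm{ch}([\mathcal M_i\to\tau_i]_{i\in I})$, $\Delta\vdash u:\mathrm{ch}(\sqcup_{i\in I}\mathcal M_i)$ and $\Lambda;y:[\tau_i]_{i\in I}\vdash r:\sigma$ infer $\Gamma\wedge\Delta\wedge\Lambda\vdash t(u,y.r):\sigma$. $\Gamma\vdash^n t:\sigma$ means a derivation whose size is $n$, the size being the number of rule instances other than (many). *)

theory Defs
  imports Main "HOL-Library.Multiset"
begin

type_synonym var = nat

(* Terms of T_J as raw named terms; t(u, y.r) is App t u y r, y bound in r. *)
datatype trm = Var var | Lam var trm | App trm trm var trm

fun fv :: "trm \<Rightarrow> var set" where
  "fv (Var x) = {x}"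
| "fv (Lam x t) = fv t - {x}"
| "fv (App t u y r) = fv t \<union> fv u \<union> (fv r - {y})"

datatype lctx = Hole | LApp trm trm var lctx

fun plug :: "lctx \<Rightarrow> trm \<Rightarrow> trm" where
  "plug Hole s = s"
| "plug (LApp t u y D) s = App t u y (plug D s)"

fun lctx_binders :: "lctx \<Rightarrow> var set" where
  "lctx_binders Hole = {}"
| "lctx_binders (LApp t u y D) = {y} \<union> lctx_binders D"

fun lctx_fv :: "lctx \<Rightarrow> var set" where
  "lctx_fv Hole = {}"
| "lctx_fv (LApp t u y D) = fv t \<union> fv u \<union> lctx_fv D"

datatype ty = Atom nat | Arr "ty multiset" ty

type_synonym env = "var \<Rightarrow> ty multiset"

definition env_join :: "env \<Rightarrow> env \<Rightarrow> env" (infixl "\<and>\<^sub>e" 65) where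
  "env_join \<Gamma> \<Delta> = (\<lambda>z. \<Gamma> z + \<Delta> z)"

definition env_single :: "var \<Rightarrow> ty multiset \<Rightarrow> env" where
  "env_single x M = (\<lambda>z. if z = x then M else {#})"

definition ch :: "ty multiset \<Rightarrow> ty \<Rightarrow> ty multiset" where
  "ch M \<tau> = (if M = {#} then {#\<tau>#} else M)"

(* has_type G t s n  : G |-^n t : s ;  has_mtype G t M n : G |-^n t : M (via rule many,
   which is not counted in the size). A nonempty finite family for (many) is
   built up one premise at a time. In (app) the family (M_i, tau_i)_{i in I}
   is a multiset P of pairs. *)
inductive has_type :: "env \<Rightarrow> trm \<Rightarrow> ty \<Rightarrow> nat \<Rightarrow> bool"
  and has_mtype :: "env \<Rightarrow> trm \<Rightarrow> ty multiset \<Rightarrow> nat \<Rightarrow> bool" where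
  t_var: "has_type (env_single x {#\<sigma>#}) (Var x) \<sigma> 1"
| t_abs: "has_type (\<Gamma>(x := M)) t \<sigma> n \<Longrightarrow> \<Gamma> x = {#} \<Longrightarrow> has_type \<Gamma> (Lam x t) (Arr M \<sigma>) (Suc n)"
| t_many1: "has_type \<Gamma> t \<sigma> n \<Longrightarrow> has_mtype \<Gamma> t {#\<sigma>#} n"
| t_many2: "has_type \<Gamma> t \<sigma> n \<Longrightarrow> has_mtype \<Delta> t M m \<Longrightarrow> has_mtype (\<Gamma> \<and>\<^sub>e \<Delta>) t (add_mset \<sigma> M) (n + m)"
| t_app: "has_mtype \<Gamma> t (ch (image_mset (\<lambda>(M, \<tau>). Arr M \<tau>) P) \<rho>1) n1 \<Longrightarrow>
          has_mtype \<Delta> u (ch (sum_mset (image_mset fst P)) \<rho>2) n2 \<Longrightarrow>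
          has_type (\<Lambda>(y := image_mset snd P)) r \<sigma> n3 \<Longrightarrow> \<Lambda> y = {#} \<Longrightarrow>
          has_type (\<Gamma> \<and>\<^sub>e \<Delta> \<and>\<^sub>e \<Lambda>) (App t u y r) \<sigma> (Suc (n1 + n2 + n3))"

end

theory Submission
  imports Defs
begin

lemma supp_fv:
  "has_type G t s n \<Longrightarrow> G z \<noteq> {#} \<Longrightarrow> z \<in> fv t"
  "has_mtype G t M n \<Longrightarrow> G z \<noteq> {#} \<Longrightarrow> z \<in> fv t"
proof (induction arbitrary: z and z rule: has_type_has_mtype.inducts)
  case (t_var x \<sigma>)
  then show ?case by (auto simp: env_single_def split: if_splits)
next
  case (t_abs \<Gamma> x M t \<sigma> n)
  then show ?case by (cases "z = x") auto
next
  case (t_many1 \<Gamma> t \<sigma> n)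
  then show ?case by auto
next
  case (t_many2 \<Gamma> t \<sigma> n \<Delta> M m)
  then show ?case by (auto simp: env_join_def)
next
  case (t_app \<Gamma> t P \<rho>1 n1 \<Delta> u \<rho>2 n2 \<Lambda> y r \<sigma> n3)
  then show ?case by (cases "z = y") (auto simp: env_join_def)
qed

inductive_cases AppE: "has_type G (App t u y r) s n"
inductive_cases LamE: "has_type G (Lam x t) s n"

lemma main:
  assumes "x \<notin> lctx_binders D" and "x \<notin> lctx_fv D"
  shows "has_type G (plug D (Lam x t)) s n \<longleftrightarrow> has_type G (Lam x (plug D t)) s n"
  using assms
proof (induction D arbitrary: G s n)
  case Hole
  then show ?case by simp
next
  case (LApp t0 u0 y D)
  have xy: "x \<noteq> y" and xt0: "x \<notin> fv t0" and xu0: "x \<notin> fv u0"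
    using LApp.prems by auto
  have IH: "\<And>G s n. has_type G (plug D (Lam x t)) s n \<longleftrightarrow> has_type G (Lam x (plug D t)) s n"
    using LApp by auto
  show ?case
  proof
    assume "has_type G (plug (LApp t0 u0 y D) (Lam x t)) s n"
    then have "has_type G (App t0 u0 y (plug D (Lam x t))) s n" by simp
    then obtain G1 P r1 n1 G2 r2 n2 L n3 where
      h1: "has_mtype G1 t0 (ch (image_mset (\<lambda>(M, \<tau>). Arr M \<tau>) P) r1) n1" and
      h2: "has_mtype G2 u0 (ch (sum_mset (image_mset fst P)) r2) n2" and
      h3: "has_type (L(y := image_mset snd P)) (plug D (Lam x t)) s n3" and
      Ly: "L y = {#}" and GG: "G = G1 \<and>\<^sub>e G2 \<and>\<^sub>e L" and nn: "n = Suc (n1 + n2 + n3)"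
      by (rule AppE) blast
    from h3 IH have "has_type (L(y := image_mset snd P)) (Lam x (plug D t)) s n3" by blast
    then obtain M \<tau> k where s: "s = Arr M \<tau>" and n3: "n3 = Suc k" and
      h4: "has_type ((L(y := image_mset snd P))(x := M)) (plug D t) \<tau> k" and
      Lx0: "(L(y := image_mset snd P)) x = {#}"
      by (rule LamE) blast
    have G1x: "G1 x = {#}" using supp_fv(2)[OF h1] xt0 by blast
    have G2x: "G2 x = {#}" using supp_fv(2)[OF h2] xu0 by blast
    have Lx: "L x = {#}" using Lx0 xy by simp
    have e1: "(L(y := image_mset snd P))(x := M) = (L(x := M))(y := image_mset snd P)"
      using xy by (auto simp: fun_eq_iff)
    have "has_type (G1 \<and>\<^sub>e G2 \<and>\<^sub>e L(x := M)) (App t0 u0 y (plug D t)) \<tau> (Suc (n1 + n2 + k))"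
      by (rule t_app[OF h1 h2]) (use h4 e1 Ly xy in auto)
    moreover have "G1 \<and>\<^sub>e G2 \<and>\<^sub>e L(x := M) = G(x := M)"
      using GG G1x G2x by (auto simp: env_join_def fun_eq_iff)
    ultimately have "has_type (G(x := M)) (App t0 u0 y (plug D t)) \<tau> (Suc (n1 + n2 + k))" by simp
    moreover have "G x = {#}" using GG G1x G2x Lx by (simp add: env_join_def)
    ultimately have "has_type G (Lam x (App t0 u0 y (plug D t))) (Arr M \<tau>) (Suc (Suc (n1 + n2 + k)))"
      by (rule t_abs)
    then show "has_type G (Lam x (plug (LApp t0 u0 y D) t)) s n" using s nn n3 by simp
  next
    assume "has_type G (Lam x (plug (LApp t0 u0 y D) t)) s n"
    then have "has_type G (Lam x (App t0 u0 y (plug D t))) s n" by simp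
    then obtain M \<tau> k where s: "s = Arr M \<tau>" and nk: "n = Suc k" and
      h0: "has_type (G(x := M)) (App t0 u0 y (plug D t)) \<tau> k" and Gx: "G x = {#}"
      by (rule LamE) blast
    from h0 obtain G1 P r1 n1 G2 r2 n2 L n3 where
      h1: "has_mtype G1 t0 (ch (image_mset (\<lambda>(M, \<tau>). Arr M \<tau>) P) r1) n1" and
      h2: "has_mtype G2 u0 (ch (sum_mset (image_mset fst P)) r2) n2" and
      h3: "has_type (L(y := image_mset snd P)) (plug D t) \<tau> n3" and
      Ly: "L y = {#}" and GG: "G(x := M) = G1 \<and>\<^sub>e G2 \<and>\<^sub>e L" and kk: "k = Suc (n1 + n2 + n3)"
      by (rule AppE) blast
    have G1x: "G1 x = {#}" using supp_fv(2)[OF h1] xt0 by blast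
    have G2x: "G2 x = {#}" using supp_fv(2)[OF h2] xu0 by blast
    have Lx: "L x = M" using G1x G2x fun_cong[OF GG, of x] by (simp add: env_join_def)
    let ?L = "L(x := {#})"
    have e1: "((?L)(y := image_mset snd P))(x := M) = L(y := image_mset snd P)"
      using xy Lx by (auto simp: fun_eq_iff)
    have "has_type ((?L)(y := image_mset snd P)) (Lam x (plug D t)) (Arr M \<tau>) (Suc n3)"
      by (rule t_abs) (use h3 e1 xy in auto)
    then have h3': "has_type ((?L)(y := image_mset snd P)) (plug D (Lam x t)) (Arr M \<tau>) (Suc n3)"
      using IH by blast
    have "has_type (G1 \<and>\<^sub>e G2 \<and>\<^sub>e ?L) (App t0 u0 y (plug D (Lam x t))) (Arr M \<tau>) (Suc (n1 + n2 + Suc n3))"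
      by (rule t_app[OF h1 h2 h3']) (use Ly xy in auto)
    moreover have "G1 \<and>\<^sub>e G2 \<and>\<^sub>e ?L = G"
    proof
      fix z show "(G1 \<and>\<^sub>e G2 \<and>\<^sub>e ?L) z = G z"
        using fun_cong[OF GG, of z] Gx G1x G2x by (cases "z = x") (auto simp: env_join_def)
    qed
    ultimately show "has_type G (plug (LApp t0 u0 y D) (Lam x t)) s n"
      using s nk kk by simp
  qed
qed

theorem mainTheorem7:
  fixes t :: trm and D :: lctx and \<Gamma> :: env and \<sigma> :: ty and n :: nat and x :: var
  assumes "finite {z. \<Gamma> z \<noteq> {#}}"
    and "x \<notin> lctx_binders D"
    and "x \<notin> lctx_fv D"
  shows "has_type \<Gamma> (plug D (Lam x t)) \<sigma> n \<longleftrightarrow> has_type \<Gamma> (Lam x (plug D t)) \<sigma> n"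
  using main assms(2,3) by blast

end
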